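(* Let $f=Fe_3F^*:D\to S^3_1$ be a CMC $1$ face with Weierstrass data $(g,\omega=h\,dz)$ and holomorphic null lift $F$, let $p\in\Sigma(f)$ be a non-degenerate singular point at which $f$ is not a front (equivalently $\operatorname{Re}\varphi(p)=0$), and let $\zeta$ be the vector field defined below. Then, with all quantities evaluated at $p$, $$\zeta^2f(p)=-2\sqrt{-1}\,\operatorname{Im}\varphi\;F\begin{pmatrix}0&g\\-\bar g&0\end{pmatrix}F^*,\qquad \zeta^3f(p)=2\sqrt{-1}\,\operatorname{Im}\varphi\,\operatorname{Im}(V\varphi)\;F\begin{pmatrix}0&g\\-\bar g&0\end{pmatrix}F^*.$$
   Context: $S^3_1=\{X\in\mathrm{Herm}(2):\det X=-1\}$. Given a domain $D\subset\mathbb{C}$, meromorphic $g$ and holomorphic $\omega=h\,dz$ with $(1+|g|^2)^2|\omega|^2$ Riemannian and $1-|g|^2\not\equiv0$, $F:D\to SL(2,\mathbb{C})$ is holomorphic with $F^{-1}dF=\begin{pmatrix}g&-g^2\\1&-g\end{pmatrix}\omega$, $F^*=\bar F^T$, and $f=Fe_3F^*$ with $e_3=\mathrm{diag}(1,-1)$ (a matrix-valued map). Singular set $\Sigma(f)=\{|g|=1\}$; $p$ non-degenerate means $dg(p)\ne0$. $\varphi=g_z/(g^2h)$, $V\psi=g\psi_z/g_z$. Set $\lambda=1-|g|^2$ and $\kappa=-\sqrt{-1}\,g(p)/(2g_z(p))$ and define the (null) vector field $\zeta=\left(\frac{\sqrt{-1}}{gh}+\kappa\lambda^2\right)\frac{\partial}{\partial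 z}+\left(-\frac{\sqrt{-1}}{\bar g\bar h}+\bar\kappa\lambda^2\right)\frac{\partial}{\partial\bar z}$; $\zeta^jf$ denotes the $j$-fold derivative of $f$ (entrywise) along $\zeta$. *)

theory Defs
  imports "HOL-Analysis.Analysis" "HOL-Complex_Analysis.Complex_Analysis"
begin

definition mat2 :: "complex \<Rightarrow> complex \<Rightarrow> complex \<Rightarrow> complex \<Rightarrow> complex^2^2" where
  "mat2 a b c d = (\<chi> i j. if i = 1 then (if j = 1 then a else b) else (if j = 1 then c else d))"

definition cstar :: "complex^2^2 \<Rightarrow> complex^2^2" where
  "cstar X = (\<chi> i j. cnj (X $ j $ i))"

definition smat :: "complex \<Rightarrow> complex^2^2 \<Rightarrow> complex^2^2" where
  "smat c X = (\<chi> i j. c * X $ i $ j)"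

definition e3 :: "complex^2^2" where
  "e3 = mat2 1 0 0 (-1)"

definition cmc1_f :: "(complex \<Rightarrow> complex^2^2) \<Rightarrow> complex \<Rightarrow> complex^2^2" where
  "cmc1_f F z = F z ** e3 ** cstar (F z)"

definition phi_fn :: "(complex \<Rightarrow> complex) \<Rightarrow> (complex \<Rightarrow> complex) \<Rightarrow> complex \<Rightarrow> complex" where
  "phi_fn g h z = deriv g z / ((g z)^2 * h z)"

definition V_op :: "(complex \<Rightarrow> complex) \<Rightarrow> (complex \<Rightarrow> complex) \<Rightarrow> complex \<Rightarrow> complex" where
  "V_op g \<psi> z = g z * deriv \<psi> z / deriv g z"

definition kappa :: "(complex \<Rightarrow> complex) \<Rightarrow> complex \<Rightarrow> complex" where
  "kappa g p = - \<i> * g p / (2 * deriv g p)"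

text \<open>The real vector field zeta = a d/dz + conj(a) d/dzbar, with
  a = i/(g h) + kappa lambda^2, lambda = 1 - |g|^2.  As a real vector field on
  the plane (identified with C) it is the vector a(z) = Re a d/dx + Im a d/dy.\<close>
definition zeta_coef :: "(complex \<Rightarrow> complex) \<Rightarrow> (complex \<Rightarrow> complex) \<Rightarrow> complex \<Rightarrow> complex \<Rightarrow> complex" where
  "zeta_coef g h p z = \<i> / (g z * h z) + kappa g p * complex_of_real ((1 - (norm (g z))^2)^2)"

definition dir_deriv :: "(complex \<Rightarrow> complex) \<Rightarrow> (complex \<Rightarrow> 'b::real_normed_vector) \<Rightarrow> complex \<Rightarrow> 'b" where
  "dir_deriv a u z = frechet_derivative u (at z) (a z)"

fun dir_deriv_pow :: "nat \<Rightarrow> (complex \<Rightarrow> complex) \<Rightarrow> (complex \<Rightarrow> 'b::real_normed_vector) \<Rightarrow> complex \<Rightarrow> 'b" where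
  "dir_deriv_pow 0 a u = u"
| "dir_deriv_pow (Suc n) a u = dir_deriv a (dir_deriv_pow n a u)"

end

theory Submission
  imports Defs
begin


lemma dd_hasD: "(u has_derivative u') (at z) \<Longrightarrow> dir_deriv a u z = u' (a z)"
  unfolding dir_deriv_def by (metis frechet_derivative_at)

lemma dd_cong:
  assumes "open S" "z \<in> S" "\<And>w. w \<in> S \<Longrightarrow> v w = u w"
  shows "dir_deriv a v z = dir_deriv a u z"
proof -
  have "\<And>D. (v has_derivative D) (at z) \<longleftrightarrow> (u has_derivative D) (at z)"
    using assms has_derivative_transform_within_open[of _ _ z UNIV S] by metis
  then show ?thesis unfolding dir_deriv_def frechet_derivative_def by simp
qed

inductive_set Sm :: "complex set \<Rightarrow> (complex \<Rightarrow> complex) set" for S where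
  hol: "u holomorphic_on S \<Longrightarrow> u \<in> Sm S"
| add: "u \<in> Sm S \<Longrightarrow> v \<in> Sm S \<Longrightarrow> (\<lambda>z. u z + v z) \<in> Sm S"
| mult: "u \<in> Sm S \<Longrightarrow> v \<in> Sm S \<Longrightarrow> (\<lambda>z. u z * v z) \<in> Sm S"
| cnj: "u \<in> Sm S \<Longrightarrow> (\<lambda>z. cnj (u z)) \<in> Sm S"
| inv: "u \<in> Sm S \<Longrightarrow> (\<forall>z\<in>S. u z \<noteq> 0) \<Longrightarrow> (\<lambda>z. inverse (u z)) \<in> Sm S"
| cong: "u \<in> Sm S \<Longrightarrow> (\<forall>z\<in>S. v z = u z) \<Longrightarrow> v \<in> Sm S"

lemma Sm_const[simp]: "(\<lambda>z. c) \<in> Sm S"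
  by (rule Sm.hol) auto

lemma Sm_diff_ok:
  assumes "open S" "u \<in> Sm S" "z \<in> S"
  shows "(u has_derivative frechet_derivative u (at z)) (at z)"
proof -
  have "u differentiable (at z)" using assms(2,3)
  proof (induction arbitrary: z rule: Sm.induct)
    case (hol u)
    then show ?case using assms(1)
      by (meson field_differentiable_imp_differentiable holomorphic_on_imp_differentiable_at)
  next
    case (add u v) then show ?case by (simp add: differentiable_add)
  next
    case (mult u v) then show ?case by (simp add: differentiable_mult)
  next
    case (cnj u)
    then obtain D where "(u has_derivative D) (at z)" unfolding differentiable_def by blast
    then have "((\<lambda>z. cnj (u z)) has_derivative (\<lambda>h. cnj (D h))) (at z)"
      by (rule bounded_linear.has_derivative[OF bounded_linear_cnj])
    then show ?case unfolding differentiable_def by blast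
  next
    case (inv u)
    then obtain D where "(u has_derivative D) (at z)" unfolding differentiable_def by blast
    then have "((\<lambda>z. inverse (u z)) has_derivative (\<lambda>h. - (inverse (u z) * D h * inverse (u z)))) (at z)"
      using inv Deriv.has_derivative_inverse[OF _ \<open>(u has_derivative D) (at z)\<close>] by blast
    then show ?case unfolding differentiable_def by blast
  next
    case (cong u v)
    then obtain D where "(u has_derivative D) (at z)" unfolding differentiable_def by blast
    then have "(v has_derivative D) (at z)"
      using has_derivative_transform_within_open[of u D z UNIV S v] cong assms(1) by auto
    then show ?case unfolding differentiable_def by blast
  qed
  then show ?thesis by (simp add: frechet_derivative_works)
qed

lemma dd_Sm_val: "open S \<Longrightarrow> u \<in> Sm S \<Longrightarrow> z \<in> S \<Longrightarrow>
   (u has_derivative (\<lambda>h. frechet_derivative u (at z) h)) (at z)"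
  using Sm_diff_ok by (metis eta_contract_eq)

lemma Sm_diff[simp]: assumes "u \<in> Sm S" "v \<in> Sm S" shows "(\<lambda>z. u z - v z) \<in> Sm S"
proof -
  have "(\<lambda>z. u z + (\<lambda>z. -1) z * v z) \<in> Sm S" using assms by (intro Sm.add Sm.mult Sm_const)
  then show ?thesis by (rule Sm.cong) auto
qed
lemma Sm_minus[simp]: assumes "u \<in> Sm S" shows "(\<lambda>z. - u z) \<in> Sm S"
proof -
  have "(\<lambda>z. (\<lambda>z. -1) z * u z) \<in> Sm S" using assms by (intro Sm.mult Sm_const)
  then show ?thesis by (rule Sm.cong) auto
qed
lemma Sm_add[simp]: "u \<in> Sm S \<Longrightarrow> v \<in> Sm S \<Longrightarrow> (\<lambda>z. u z + v z) \<in> Sm S"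
  by (rule Sm.add)
lemma Sm_mult[simp]: "u \<in> Sm S \<Longrightarrow> v \<in> Sm S \<Longrightarrow> (\<lambda>z. u z * v z) \<in> Sm S"
  by (rule Sm.mult)
lemma Sm_cnj[simp]: "u \<in> Sm S \<Longrightarrow> (\<lambda>z. cnj (u z)) \<in> Sm S"
  by (rule Sm.cnj)
lemma Sm_inv[simp]: "u \<in> Sm S \<Longrightarrow> \<forall>z\<in>S. u z \<noteq> 0 \<Longrightarrow> (\<lambda>z. inverse (u z)) \<in> Sm S"
  by (rule Sm.inv)

context
  fixes S :: "complex set" and a :: "complex \<Rightarrow> complex"
  assumes S: "open S"
begin

lemma dd_add[simp]: "u \<in> Sm S \<Longrightarrow> v \<in> Sm S \<Longrightarrow> z \<in> S \<Longrightarrow>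
   dir_deriv a (\<lambda>z. u z + v z) z = dir_deriv a u z + dir_deriv a v z"
  by (subst dd_hasD[OF has_derivative_add[OF dd_Sm_val[OF S, of u z] dd_Sm_val[OF S, of v z]]])
     (simp_all add: dir_deriv_def algebra_simps)

lemma dd_diff[simp]: "u \<in> Sm S \<Longrightarrow> v \<in> Sm S \<Longrightarrow> z \<in> S \<Longrightarrow>
   dir_deriv a (\<lambda>z. u z - v z) z = dir_deriv a u z - dir_deriv a v z"
  by (subst dd_hasD[OF has_derivative_diff[OF dd_Sm_val[OF S, of u z] dd_Sm_val[OF S, of v z]]])
     (simp_all add: dir_deriv_def algebra_simps)

lemma dd_minus[simp]: "u \<in> Sm S \<Longrightarrow> z \<in> S \<Longrightarrow>
   dir_deriv a (\<lambda>z. - u z) z = - dir_deriv a u z"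
  by (subst dd_hasD[OF has_derivative_minus[OF dd_Sm_val[OF S, of u z]]])
     (simp_all add: dir_deriv_def)

lemma dd_mult[simp]: "u \<in> Sm S \<Longrightarrow> v \<in> Sm S \<Longrightarrow> z \<in> S \<Longrightarrow>
   dir_deriv a (\<lambda>z. u z * v z) z = dir_deriv a u z * v z + u z * dir_deriv a v z"
  by (subst dd_hasD[OF has_derivative_mult[OF dd_Sm_val[OF S, of u z] dd_Sm_val[OF S, of v z]]])
     (simp_all add: dir_deriv_def algebra_simps)

lemma dd_cnj[simp]: "u \<in> Sm S \<Longrightarrow> z \<in> S \<Longrightarrow>
   dir_deriv a (\<lambda>z. cnj (u z)) z = cnj (dir_deriv a u z)"
  by (subst dd_hasD[OF bounded_linear.has_derivative[OF bounded_linear_cnj dd_Sm_val[OF S, of u z]]])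
     (simp_all add: dir_deriv_def)

lemma dd_inv[simp]: "u \<in> Sm S \<Longrightarrow> z \<in> S \<Longrightarrow> u z \<noteq> 0 \<Longrightarrow>
   dir_deriv a (\<lambda>z. inverse (u z)) z = - (inverse (u z) * dir_deriv a u z * inverse (u z))"
  by (subst dd_hasD[OF Deriv.has_derivative_inverse[OF _ dd_Sm_val[OF S, of u z]]])
     (simp_all add: dir_deriv_def)

lemma dd_const[simp]: "dir_deriv a (\<lambda>z. c) z = 0"
proof -
  have "((\<lambda>z. c) has_derivative (\<lambda>x. 0)) (at z)" by simp
  from dd_hasD[OF this] show ?thesis by simp
qed

lemma dd_hol: "u holomorphic_on S \<Longrightarrow> z \<in> S \<Longrightarrow> dir_deriv a u z = deriv u z * a z"
proof -
  assume "u holomorphic_on S" "z \<in> S"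
  then have "(u has_field_derivative deriv u z) (at z)"
    using S holomorphic_derivI by blast
  then show ?thesis unfolding has_field_derivative_def by (auto dest!: dd_hasD)
qed

lemma dd_Sm: assumes aS: "a \<in> Sm S" and uS: "u \<in> Sm S" shows "(\<lambda>z. dir_deriv a u z) \<in> Sm S"
  using uS
proof (induction rule: Sm.induct)
  case (hol u)
  have "(\<lambda>z. deriv u z * a z) \<in> Sm S"
    using Sm.mult[OF Sm.hol[OF holomorphic_deriv[OF hol(1) S]] aS] .
  then show ?case by (rule Sm.cong) (use hol dd_hol in auto)
next
  case (add u v)
  show ?case by (rule Sm.cong[of "\<lambda>z. dir_deriv a u z + dir_deriv a v z"]) (use add in auto)
next
  case (mult u v)
  show ?case by (rule Sm.cong[of "\<lambda>z. dir_deriv a u z * v z + u z * dir_deriv a v z"]) (use mult in auto)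
next
  case (cnj u)
  show ?case by (rule Sm.cong[of "\<lambda>z. cnj (dir_deriv a u z)"]) (use cnj in auto)
next
  case (inv u)
  show ?case by (rule Sm.cong[of "\<lambda>z. - (inverse (u z) * dir_deriv a u z * inverse (u z))"]) (use inv in auto)
next
  case (cong u v)
  show ?case by (rule Sm.cong[OF cong(3)]) (use cong S dd_cong[of S _ v u a] in auto)
qed

end



lemmas dd_simps = dd_add dd_diff dd_minus dd_mult dd_cnj dd_inv dd_const



abbreviation m11 :: "complex^2^2 \<Rightarrow> complex" where "m11 X \<equiv> vec_nth (vec_nth X 1) 1"
abbreviation m12 :: "complex^2^2 \<Rightarrow> complex" where "m12 X \<equiv> vec_nth (vec_nth X 1) 2"
abbreviation m21 :: "complex^2^2 \<Rightarrow> complex" where "m21 X \<equiv> vec_nth (vec_nth X 2) 1"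
abbreviation m22 :: "complex^2^2 \<Rightarrow> complex" where "m22 X \<equiv> vec_nth (vec_nth X 2) 2"

lemma forall_2: "(\<forall>i::2. P i) \<longleftrightarrow> P 1 \<and> P 2"
  by (metis exhaust_2)

lemma mat2_nth[simp]: "m11 (mat2 a b c d) = a" "m12 (mat2 a b c d) = b"
   "m21 (mat2 a b c d) = c" "m22 (mat2 a b c d) = d"
  by (simp_all add: mat2_def)

lemma mat2_eq_iff: "X = Y \<longleftrightarrow> m11 X = m11 Y \<and> m12 X = m12 Y \<and> m21 X = m21 Y \<and> m22 X = m22 Y"
  for X Y :: "complex^2^2"
  by (simp only: vec_eq_iff forall_2 conj_assoc)

lemma mat2_eta: "X = mat2 (m11 X) (m12 X) (m21 X) (m22 X)"
  by (simp add: mat2_eq_iff)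

lemma mat2_inj[simp]: "mat2 a b c d = mat2 a' b' c' d' \<longleftrightarrow> a = a' \<and> b = b' \<and> c = c' \<and> d = d'"
  by (simp add: mat2_eq_iff)

lemma mat2_mult: "mat2 a b c d ** mat2 a' b' c' d' = mat2 (a*a'+b*c') (a*b'+b*d') (c*a'+d*c') (c*b'+d*d')"
  by (simp add: mat2_eq_iff matrix_matrix_mult_def sum_2)

lemma mat2_add: "mat2 a b c d + mat2 a' b' c' d' = mat2 (a+a') (b+b') (c+c') (d+d')"
  by (simp add: mat2_eq_iff)

lemma mat2_zero: "(0::complex^2^2) = mat2 0 0 0 0"
  by (simp add: mat2_eq_iff)

lemma cstar_mat2: "cstar (mat2 a b c d) = mat2 (cnj a) (cnj c) (cnj b) (cnj d)"
  by (simp add: mat2_eq_iff cstar_def)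

lemma smat_mat2: "smat k (mat2 a b c d) = mat2 (k*a) (k*b) (k*c) (k*d)"
  by (simp add: mat2_eq_iff smat_def)

lemma scaleR_mat2: "r *\<^sub>R mat2 a b c d = mat2 (r *\<^sub>R a) (r *\<^sub>R b) (r *\<^sub>R c) (r *\<^sub>R d)"
  by (simp add: mat2_eq_iff)

lemma bl_mat2_1: "bounded_linear (\<lambda>c. mat2 c 0 0 0)"
  and bl_mat2_2: "bounded_linear (\<lambda>c. mat2 0 c 0 0)"
  and bl_mat2_3: "bounded_linear (\<lambda>c. mat2 0 0 c 0)"
  and bl_mat2_4: "bounded_linear (\<lambda>c. mat2 0 0 0 c)"
  by (auto simp: linear_conv_bounded_linear[symmetric] intro!: linearI simp: mat2_add scaleR_mat2)

definition msm :: "complex set \<Rightarrow> (complex \<Rightarrow> complex^2^2) \<Rightarrow> bool" where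
  "msm S X \<longleftrightarrow> (\<lambda>z. m11 (X z)) \<in> Sm S \<and> (\<lambda>z. m12 (X z)) \<in> Sm S \<and> (\<lambda>z. m21 (X z)) \<in> Sm S \<and> (\<lambda>z. m22 (X z)) \<in> Sm S"

lemma msm_mat2[simp]: "msm S (\<lambda>z. mat2 (p z) (q z) (r z) (s z)) \<longleftrightarrow> p \<in> Sm S \<and> q \<in> Sm S \<and> r \<in> Sm S \<and> s \<in> Sm S"
  by (simp add: msm_def)

lemma msm_eta: "X = (\<lambda>z. mat2 (m11 (X z)) (m12 (X z)) (m21 (X z)) (m22 (X z)))"
  using mat2_eta by blast

context
  fixes S :: "complex set" and a :: "complex \<Rightarrow> complex"
  assumes S: "open S"
begin

lemma dd_mat2:
  assumes "p \<in> Sm S" "q \<in> Sm S" "r \<in> Sm S" "s \<in> Sm S" "z \<in> S"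
  shows "dir_deriv a (\<lambda>w. mat2 (p w) (q w) (r w) (s w)) z
       = mat2 (dir_deriv a p z) (dir_deriv a q z) (dir_deriv a r z) (dir_deriv a s z)"
proof -
  have e: "(\<lambda>w. mat2 (p w) (q w) (r w) (s w)) = (\<lambda>w. mat2 (p w) 0 0 0 + mat2 0 (q w) 0 0 + mat2 0 0 (r w) 0 + mat2 0 0 0 (s w))"
    by (simp add: mat2_add)
  have H: "((\<lambda>w. mat2 (p w) 0 0 0 + mat2 0 (q w) 0 0 + mat2 0 0 (r w) 0 + mat2 0 0 0 (s w)) has_derivative
     (\<lambda>h. mat2 (frechet_derivative p (at z) h) 0 0 0 + mat2 0 (frechet_derivative q (at z) h) 0 0
         + mat2 0 0 (frechet_derivative r (at z) h) 0 + mat2 0 0 0 (frechet_derivative s (at z) h))) (at z)"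
    by (intro has_derivative_add bounded_linear.has_derivative[OF bl_mat2_1] bounded_linear.has_derivative[OF bl_mat2_2]
          bounded_linear.has_derivative[OF bl_mat2_3] bounded_linear.has_derivative[OF bl_mat2_4] dd_Sm_val[OF S] assms)
  show ?thesis unfolding e dd_hasD[OF H] by (simp add: mat2_add dir_deriv_def)
qed

lemma dd_mat: "msm S X \<Longrightarrow> z \<in> S \<Longrightarrow> dir_deriv a X z = mat2 (dir_deriv a (\<lambda>w. m11 (X w)) z)
   (dir_deriv a (\<lambda>w. m12 (X w)) z) (dir_deriv a (\<lambda>w. m21 (X w)) z) (dir_deriv a (\<lambda>w. m22 (X w)) z)"
  unfolding arg_cong[where f="\<lambda>X. dir_deriv a X z", OF msm_eta[of X]]
  by (rule dd_mat2) (auto simp: msm_def)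

lemma dd_mconst[simp]: "dir_deriv a (\<lambda>z. M) z = 0"
proof -
  have "((\<lambda>z. M) has_derivative (\<lambda>x. 0)) (at z)" by simp
  from dd_hasD[OF this] show ?thesis by simp
qed

end


lemma mult_expand: "X ** Y = mat2 (m11 X * m11 Y + m12 X * m21 Y) (m11 X * m12 Y + m12 X * m22 Y)
    (m21 X * m11 Y + m22 X * m21 Y) (m21 X * m12 Y + m22 X * m22 Y)"
  by (subst (1 2) mat2_eta) (simp only: mat2_mult mat2_nth)
lemma add_expand: "X + Y = mat2 (m11 X + m11 Y) (m12 X + m12 Y) (m21 X + m21 Y) (m22 X + m22 Y)"
  by (subst (1 2) mat2_eta) (simp only: mat2_add mat2_nth)
lemma cstar_expand: "cstar X = mat2 (cnj (m11 X)) (cnj (m21 X)) (cnj (m12 X)) (cnj (m22 X))"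
  by (subst (1) mat2_eta) (simp only: cstar_mat2 mat2_nth)
lemma smat_expand: "smat c X = mat2 (c * m11 X) (c * m12 X) (c * m21 X) (c * m22 X)"
  by (subst (1) mat2_eta) (simp only: smat_mat2 mat2_nth)

lemma msm_mmult[simp]: "msm S X \<Longrightarrow> msm S Y \<Longrightarrow> msm S (\<lambda>z. X z ** Y z)"
  unfolding mult_expand by (simp add: msm_def)
lemma msm_madd[simp]: "msm S X \<Longrightarrow> msm S Y \<Longrightarrow> msm S (\<lambda>z. X z + Y z)"
  unfolding add_expand by (simp add: msm_def)
lemma msm_cstar[simp]: "msm S X \<Longrightarrow> msm S (\<lambda>z. cstar (X z))"
  unfolding cstar_expand by (simp add: msm_def)
lemma msm_smat[simp]: "c \<in> Sm S \<Longrightarrow> msm S X \<Longrightarrow> msm S (\<lambda>z. smat (c z) (X z))"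
  unfolding smat_expand by (simp add: msm_def)
lemma msm_mconst[simp]: "msm S (\<lambda>z. M)"
  by (simp add: msm_def)

context
  fixes S :: "complex set" and a :: "complex \<Rightarrow> complex"
  assumes S: "open S"
begin

lemma dd_mmult: "msm S X \<Longrightarrow> msm S Y \<Longrightarrow> z \<in> S \<Longrightarrow>
  dir_deriv a (\<lambda>z. X z ** Y z) z = dir_deriv a X z ** Y z + X z ** dir_deriv a Y z"
  unfolding dd_mat[OF S, of X] dd_mat[OF S, of Y]
  apply (subst (1 2 3) mult_expand)
  apply (subst dd_mat2[OF S])
  by (auto simp: msm_def S dd_simps[OF S] add_expand algebra_simps)

lemma dd_madd: "msm S X \<Longrightarrow> msm S Y \<Longrightarrow> z \<in> S \<Longrightarrow>
  dir_deriv a (\<lambda>z. X z + Y z) z = dir_deriv a X z + dir_deriv a Y z"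
  unfolding dd_mat[OF S, of X] dd_mat[OF S, of Y]
  apply (subst (1) add_expand)
  apply (subst dd_mat2[OF S])
  by (auto simp: msm_def S dd_simps[OF S] add_expand algebra_simps)

lemma dd_cstar: "msm S X \<Longrightarrow> z \<in> S \<Longrightarrow>
  dir_deriv a (\<lambda>z. cstar (X z)) z = cstar (dir_deriv a X z)"
  unfolding dd_mat[OF S, of X]
  apply (subst (1) cstar_expand)
  apply (subst dd_mat2[OF S])
  by (auto simp: msm_def S dd_simps[OF S] cstar_mat2)

lemma dd_smat: "c \<in> Sm S \<Longrightarrow> msm S X \<Longrightarrow> z \<in> S \<Longrightarrow>
  dir_deriv a (\<lambda>z. smat (c z) (X z)) z = smat (dir_deriv a c z) (X z) + smat (c z) (dir_deriv a X z)"
  unfolding dd_mat[OF S, of X]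
  apply (subst (1 2) smat_expand)
  apply (subst dd_mat2[OF S])
  by (auto simp: msm_def S dd_simps[OF S] smat_mat2 add_expand algebra_simps)

end



definition Amat :: "(complex \<Rightarrow> complex) \<Rightarrow> complex \<Rightarrow> complex^2^2" where
  "Amat g z = mat2 (g z) (- (g z * g z)) 1 (- g z)"

definition Nop :: "(complex \<Rightarrow> complex) \<Rightarrow> (complex \<Rightarrow> complex) \<Rightarrow> (complex \<Rightarrow> complex)
   \<Rightarrow> (complex \<Rightarrow> complex^2^2) \<Rightarrow> complex \<Rightarrow> complex^2^2" where
  "Nop a b g M = (\<lambda>z. dir_deriv a M z + smat (b z) (Amat g z ** M z) + smat (cnj (b z)) (M z ** cstar (Amat g z)))"

lemma msm_dd:
  assumes S: "open S" and aS: "a \<in> Sm S" and MS: "msm S M"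
  shows "msm S (\<lambda>z. dir_deriv a M z)"
proof -
  note D = dd_mat[OF S MS]
  have E: "(\<lambda>w. m11 (M w)) \<in> Sm S" "(\<lambda>w. m12 (M w)) \<in> Sm S" "(\<lambda>w. m21 (M w)) \<in> Sm S" "(\<lambda>w. m22 (M w)) \<in> Sm S"
    using MS by (simp_all add: msm_def)
  have "(\<lambda>z. m11 (dir_deriv a M z)) \<in> Sm S"
    by (rule Sm.cong[OF dd_Sm[OF S aS E(1)]]) (simp add: D)
  moreover have "(\<lambda>z. m12 (dir_deriv a M z)) \<in> Sm S"
    by (rule Sm.cong[OF dd_Sm[OF S aS E(2)]]) (simp add: D)
  moreover have "(\<lambda>z. m21 (dir_deriv a M z)) \<in> Sm S"
    by (rule Sm.cong[OF dd_Sm[OF S aS E(3)]]) (simp add: D)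
  moreover have "(\<lambda>z. m22 (dir_deriv a M z)) \<in> Sm S"
    by (rule Sm.cong[OF dd_Sm[OF S aS E(4)]]) (simp add: D)
  ultimately show ?thesis unfolding msm_def by blast
qed

lemma step:
  fixes F :: "complex \<Rightarrow> complex^2^2"
  assumes S: "open S" and aS: "a \<in> Sm S" and hS: "h \<in> Sm S" and gS: "g \<in> Sm S"
    and FS: "msm S F"
    and dF: "\<forall>z\<in>S. dir_deriv a F z = F z ** smat (a z * h z) (Amat g z)"
    and MS: "msm S M"
    and G: "\<And>z. z \<in> S \<Longrightarrow> G z = F z ** M z ** cstar (F z)"
    and z: "z \<in> S"
  shows "dir_deriv a G z = F z ** Nop a (\<lambda>z. a z * h z) g M z ** cstar (F z)"
proof -
  have "dir_deriv a G z = dir_deriv a (\<lambda>z. F z ** M z ** cstar (F z)) z"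
    by (rule dd_cong[OF S z G])
  also have "\<dots> = (dir_deriv a F z ** M z + F z ** dir_deriv a M z) ** cstar (F z)
       + F z ** M z ** cstar (dir_deriv a F z)"
    using S FS MS z by (simp add: dd_mmult dd_cstar)
  also have "\<dots> = F z ** Nop a (\<lambda>z. a z * h z) g M z ** cstar (F z)"
    unfolding dF[rule_format, OF z] Nop_def Amat_def dd_mat[OF S MS z]
    by (simp only: mult_expand add_expand smat_expand cstar_expand mat2_nth mat2_inj complex_cnj_mult complex_cnj_add
         complex_cnj_minus complex_cnj_one complex_cnj_cnj) algebra
  finally show ?thesis .
qed


lemma fsmat: "X ** smat c Y ** cstar X = smat c (X ** Y ** cstar X)"
  by (simp only: mult_expand smat_expand cstar_expand mat2_nth mat2_inj) algebra

lemma mm_zero_r[simp]: "X ** (0::complex^2^2) = 0" by (simp add: matrix_matrix_mult_def vec_eq_iff)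
lemma mm_zero_l[simp]: "(0::complex^2^2) ** X = 0" by (simp add: matrix_matrix_mult_def vec_eq_iff)
lemma smat_zero[simp]: "smat c (0::complex^2^2) = 0" by (simp only: smat_expand mat2_zero mat2_nth) simp
lemma smat_add: "smat c (X + Y) = smat c X + smat c Y" by (simp only: smat_expand add_expand mat2_nth mat2_inj) (simp add: algebra_simps)

lemma core:
  fixes g h :: "complex \<Rightarrow> complex" and F :: "complex \<Rightarrow> complex^2^2" and S :: "complex set" and p :: complex
  assumes S: "open S" and pS: "p \<in> S"
    and gh: "g holomorphic_on S" and hh: "h holomorphic_on S"
    and gnz: "\<forall>z\<in>S. g z \<noteq> 0" and hnz: "\<forall>z\<in>S. h z \<noteq> 0"
    and Fh: "\<forall>i j. (\<lambda>z. F z $ i $ j) holomorphic_on S"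
    and Fode: "\<forall>z\<in>S. \<forall>i j. ((\<lambda>w. F w $ i $ j) has_field_derivative
                  (F z ** smat (h z) (mat2 (g z) (- ((g z)^2)) 1 (- g z))) $ i $ j) (at z)"
    and p_sing: "norm (g p) = 1"
    and p_nondeg: "deriv g p \<noteq> 0"
    and p_nonfront: "Re (phi_fn g h p) = 0"
  shows "dir_deriv_pow 2 (zeta_coef g h p) (cmc1_f F) p
           = smat (- 2 * \<i> * complex_of_real (Im (phi_fn g h p)))
               (F p ** mat2 0 (g p) (- cnj (g p)) 0 ** cstar (F p))
       \<and> dir_deriv_pow 3 (zeta_coef g h p) (cmc1_f F) p
           = smat (2 * \<i> * complex_of_real (Im (phi_fn g h p) * Im (V_op g (phi_fn g h) p)))
               (F p ** mat2 0 (g p) (- cnj (g p)) 0 ** cstar (F p))"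
proof -
  define a where "a = zeta_coef g h p"
  define kap where "kap = kappa g p"
  define b where "b = (\<lambda>z. a z * h z)"
  have gS[simp]: "g \<in> Sm S" and hS[simp]: "h \<in> Sm S" using gh hh by (auto intro: Sm.hol)
  have gnz': "\<forall>z\<in>S. g z \<noteq> 0" "\<forall>z\<in>S. h z \<noteq> 0" using gnz hnz by auto
  have arep: "\<forall>z\<in>S. a z = \<i> * (inverse (g z) * inverse (h z)) + kap * ((1 - g z * cnj (g z)) * (1 - g z * cnj (g z)))"
  proof
    fix z assume "z \<in> S"
    have n: "complex_of_real ((norm (g z))^2) = g z * cnj (g z)" by (rule complex_norm_square)
    have "complex_of_real ((1 - (norm (g z))^2)^2) = (1 - complex_of_real ((norm (g z))^2))^2"
      by (simp only: of_real_power of_real_diff of_real_1)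
    also have "\<dots> = (1 - g z * cnj (g z)) * (1 - g z * cnj (g z))"
      unfolding n by (simp only: power2_eq_square)
    finally have "complex_of_real ((1 - (norm (g z))^2)^2) = (1 - g z * cnj (g z)) * (1 - g z * cnj (g z))" .
    then show "a z = \<i> * (inverse (g z) * inverse (h z)) + kap * ((1 - g z * cnj (g z)) * (1 - g z * cnj (g z)))"
      unfolding a_def zeta_coef_def kap_def by (simp add: divide_inverse)
  qed
  have aS[simp]: "a \<in> Sm S"
    by (rule Sm.cong[OF _ arep]) (simp add: gnz')
  have bS[simp]: "b \<in> Sm S" unfolding b_def by simp
  have FS: "msm S F" unfolding msm_def using Fh by (auto intro: Sm.hol)
  have dF: "dir_deriv a F z = F z ** smat (a z * h z) (Amat g z)" if z: "z \<in> S" for z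
  proof -
    have d: "deriv (\<lambda>w. F w $ i $ j) z = (F z ** smat (h z) (mat2 (g z) (- ((g z)^2)) 1 (- g z))) $ i $ j" for i j
      using Fode z by (meson DERIV_imp_deriv)
    show ?thesis
      unfolding dd_mat[OF S FS z]
      apply (subst (1 2 3 4) dd_hol[OF S _ z])
      using Fh apply (blast, blast, blast, blast)
      unfolding d Amat_def
      by (simp only: mult_expand smat_expand mat2_nth mat2_inj power2_eq_square) algebra
  qed
  have AS[simp]: "msm S (Amat g)" unfolding Amat_def by simp
  have NS: "msm S M \<Longrightarrow> msm S (Nop a b g M)" for M
    unfolding Nop_def using S by (simp add: msm_dd)
  define M0 where "M0 = (\<lambda>z::complex. e3)"
  define M1 where "M1 = Nop a b g M0"
  define M2 where "M2 = Nop a b g M1"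
  define M3 where "M3 = Nop a b g M2"
  have M0S: "msm S M0" unfolding M0_def by simp
  have M1S: "msm S M1" unfolding M1_def by (rule NS[OF M0S])
  have M2S: "msm S M2" unfolding M2_def by (rule NS[OF M1S])
  have I0: "\<And>z. z \<in> S \<Longrightarrow> dir_deriv_pow 0 a (cmc1_f F) z = F z ** M0 z ** cstar (F z)"
    by (simp add: cmc1_f_def M0_def)
  have dF': "\<forall>z\<in>S. dir_deriv a F z = F z ** smat (a z * h z) (Amat g z)" using dF by blast
  note st = step[OF S aS hS gS FS dF', folded b_def]
  have I1: "\<And>z. z \<in> S \<Longrightarrow> dir_deriv_pow 1 a (cmc1_f F) z = F z ** M1 z ** cstar (F z)"
    using st[OF M0S I0] unfolding M1_def by simp
  have I2: "\<And>z. z \<in> S \<Longrightarrow> dir_deriv_pow 2 a (cmc1_f F) z = F z ** M2 z ** cstar (F z)"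
    using st[OF M1S I1] unfolding M2_def by (simp add: numeral_2_eq_2)
  have I3: "\<And>z. z \<in> S \<Longrightarrow> dir_deriv_pow 3 a (cmc1_f F) z = F z ** M3 z ** cstar (F z)"
    using st[OF M2S I2] unfolding M3_def by (simp add: numeral_3_eq_3 numeral_2_eq_2)
  note dds = dd_simps[OF S]
  define Dg where "Dg = (\<lambda>z. dir_deriv a g z)"
  define Db where "Db = (\<lambda>z. dir_deriv a b z)"
  define Dh where "Dh = (\<lambda>z. dir_deriv a h z)"
  have DgS[simp]: "Dg \<in> Sm S" and DbS[simp]: "Db \<in> Sm S" and DhS[simp]: "Dh \<in> Sm S"
    unfolding Dg_def Db_def Dh_def by (simp_all add: dd_Sm S)
  have cg0: "cnj (g p) = inverse (g p)"
  proof -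
    have "complex_of_real ((norm (g p))^2) = g p * cnj (g p)" by (rule complex_norm_square)
    then have "g p * cnj (g p) = 1" using p_sing by simp
    then show ?thesis using gnz pS by (simp add: field_simps)
  qed
  have g0nz: "g p \<noteq> 0" and h0nz: "h p \<noteq> 0" using gnz hnz pS by auto
  have a0: "a p = \<i> * (inverse (g p) * inverse (h p))"
    using arep pS cg0 g0nz by simp
  have b0: "b p = \<i> * inverse (g p)"
    using a0 h0nz unfolding b_def by (simp add: field_simps)
  have M1e: "M1 = (\<lambda>z. mat2 (b z * g z + cnj (b z) * cnj (g z)) (b z * (g z * g z) + cnj (b z))
        (b z + cnj (b z) * (cnj (g z) * cnj (g z))) (b z * g z + cnj (b z) * cnj (g z)))"
    unfolding M1_def Nop_def M0_def dd_mconst[OF S] e3_def Amat_def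
    by (simp only: mult_expand smat_expand add_expand cstar_expand mat2_nth mat2_inj complex_cnj_mult complex_cnj_add
         complex_cnj_minus complex_cnj_one complex_cnj_cnj complex_cnj_zero mat2_zero) (rule ext, simp)
  have dM1: "dir_deriv a M1 z = mat2
      (Db z * g z + b z * Dg z + (cnj (Db z) * cnj (g z) + cnj (b z) * cnj (Dg z)))
      (Db z * (g z * g z) + b z * (Dg z * g z + g z * Dg z) + cnj (Db z))
      (Db z + (cnj (Db z) * (cnj (g z) * cnj (g z)) + cnj (b z) * (cnj (Dg z) * cnj (g z) + cnj (g z) * cnj (Dg z))))
      (Db z * g z + b z * Dg z + (cnj (Db z) * cnj (g z) + cnj (b z) * cnj (Dg z)))" if z: "z \<in> S" for z
    unfolding M1e
    apply (subst dd_mat2[OF S])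
    using z by (simp_all add: dds Dg_def Db_def)
  have M2e: "M2 z = mat2
      (Db z * g z + b z * Dg z + (cnj (Db z) * cnj (g z) + cnj (b z) * cnj (Dg z)))
      (Db z * (g z * g z) + b z * (Dg z * g z + g z * Dg z) + cnj (Db z))
      (Db z + (cnj (Db z) * (cnj (g z) * cnj (g z)) + cnj (b z) * (cnj (Dg z) * cnj (g z) + cnj (g z) * cnj (Dg z))))
      (Db z * g z + b z * Dg z + (cnj (Db z) * cnj (g z) + cnj (b z) * cnj (Dg z)))
     + smat (b z) (Amat g z ** M1 z) + smat (cnj (b z)) (M1 z ** cstar (Amat g z))" if z: "z \<in> S" for z
    unfolding M2_def Nop_def dM1[OF z] ..
  have M10: "M1 p = 0" using g0nz by (simp add: M1e b0 cg0 mat2_zero field_simps)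
  have Dg0: "Dg p = deriv g p * a p" unfolding Dg_def by (rule dd_hol[OF S gh pS])
  have Dh0: "Dh p = deriv h p * a p" unfolding Dh_def by (rule dd_hol[OF S hh pS])
  have brep: "\<forall>z\<in>S. b z = \<i> * inverse (g z) + kap * ((1 - g z * cnj (g z)) * (1 - g z * cnj (g z)) * h z)"
    using arep hnz gnz unfolding b_def by (simp add: field_simps)
  have DbS_eq: "Db z = - (\<i> * Dg z * inverse (g z) * inverse (g z)) + kap * (2 * (1 - g z * cnj (g z))
         * (- (Dg z * cnj (g z) + g z * cnj (Dg z))) * h z + (1 - g z * cnj (g z)) * (1 - g z * cnj (g z)) * Dh z)"
    if z: "z \<in> S" for z
  proof -
    have "Db z = dir_deriv a (\<lambda>z. \<i> * inverse (g z) + kap * ((1 - g z * cnj (g z)) * (1 - g z * cnj (g z)) * h z)) z"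
      unfolding Db_def by (rule dd_cong[OF S z]) (use brep in auto)
    then show ?thesis
      using z gnz by (simp add: dds Dg_def Dh_def algebra_simps)
  qed
  have Db0: "Db p = - (\<i> * Dg p * inverse (g p) * inverse (g p))"
    using DbS_eq[OF pS] cg0 g0nz by simp
  have phi0: "phi_fn g h p = deriv g p / ((g p)^2 * h p)" unfolding phi_fn_def ..
  have cphi: "cnj (phi_fn g h p) = - phi_fn g h p"
    using p_nonfront by (simp add: complex_eq_iff)
  have ofIm: "complex_of_real (Im w) = (w - cnj w) / (2 * \<i>)" for w
    by (simp add: complex_eq_iff)
  have cg1: "cnj (deriv g p) = - deriv g p * cnj (h p) / ((g p)^4 * h p)"
  proof -
    from cphi have "cnj (deriv g p) / ((cnj (g p))^2 * cnj (h p)) = - (deriv g p / ((g p)^2 * h p))"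
      by (simp add: phi_fn_def)
    then show ?thesis using g0nz h0nz unfolding cg0 by (simp add: field_simps)
  qed
  have part2: "M2 p = smat (- 2 * \<i> * complex_of_real (Im (phi_fn g h p))) (mat2 0 (g p) (- cnj (g p)) 0)"
    unfolding M2e[OF pS] M10 ofIm cphi Db0 Dg0
    using g0nz h0nz
    apply (simp add: a0 b0 phi0 cg0 cg1 smat_mat2 mat2_zero mat2_add mat2_mult Amat_def cstar_mat2 field_simps)
    by (intro conjI; algebra)
  define D1 where "D1 = (\<lambda>z. mat2
      (Db z * g z + b z * Dg z + (cnj (Db z) * cnj (g z) + cnj (b z) * cnj (Dg z)))
      (Db z * (g z * g z) + b z * (Dg z * g z + g z * Dg z) + cnj (Db z))
      (Db z + (cnj (Db z) * (cnj (g z) * cnj (g z)) + cnj (b z) * (cnj (Dg z) * cnj (g z) + cnj (g z) * cnj (Dg z))))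
      (Db z * g z + b z * Dg z + (cnj (Db z) * cnj (g z) + cnj (b z) * cnj (Dg z))))"
  have D1S: "msm S D1" unfolding D1_def by simp
  have M1S': "msm S M1" by (rule M1S)
  have M2p: "M2 p = D1 p" using M2e[OF pS] M10 unfolding D1_def by simp
  have dM2: "dir_deriv a M2 p = dir_deriv a D1 p + smat (b p) (Amat g p ** M2 p) + smat (cnj (b p)) (M2 p ** cstar (Amat g p))"
  proof -
    have "dir_deriv a M2 p = dir_deriv a (\<lambda>z. D1 z + smat (b z) (Amat g z ** M1 z) + smat (cnj (b z)) (M1 z ** cstar (Amat g z))) p"
      by (rule dd_cong[OF S pS]) (simp add: M2e D1_def)
    also have "\<dots> = dir_deriv a D1 p + smat (b p) (Amat g p ** dir_deriv a M1 p) + smat (cnj (b p)) (dir_deriv a M1 p ** cstar (Amat g p))"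
      using S pS D1S M1S AS
      by (simp add: dd_madd dd_smat dd_mmult dd_cstar msm_dd M10)
    finally show ?thesis using dM1[OF pS] M2p
      unfolding D1_def by simp
  qed
  have lam0: "1 - g p * cnj (g p) = 0" using g0nz by (simp add: cg0)
  have Da0: "dir_deriv a a p = - \<i> * (Dg p * inverse (g p) * inverse (g p) * inverse (h p) + Dh p * inverse (g p) * inverse (h p) * inverse (h p))"
  proof -
    have "dir_deriv a a p = dir_deriv a (\<lambda>z. \<i> * (inverse (g z) * inverse (h z)) + kap * ((1 - g z * cnj (g z)) * (1 - g z * cnj (g z)))) p"
      by (rule dd_cong[OF S pS]) (use arep in auto)
    then show ?thesis using pS gnz hnz g0nz h0nz
      by (simp add: dds Dg_def Dh_def lam0) (simp add: algebra_simps)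
  qed
  have DDg0: "dir_deriv a Dg p = deriv (deriv g) p * a p * a p + deriv g p * dir_deriv a a p"
  proof -
    have "dir_deriv a Dg p = dir_deriv a (\<lambda>z. deriv g z * a z) p"
      by (rule dd_cong[OF S pS]) (simp add: Dg_def dd_hol[OF S gh])
    also have "\<dots> = dir_deriv a (deriv g) p * a p + deriv g p * dir_deriv a a p"
      using pS holomorphic_deriv[OF gh S] by (simp add: dds Sm.hol)
    finally show ?thesis using dd_hol[OF S holomorphic_deriv[OF gh S] pS] by simp
  qed
  have DDb0: "dir_deriv a Db p = - \<i> * (dir_deriv a Dg p * inverse (g p) * inverse (g p))
     + 2 * \<i> * Dg p * Dg p * inverse (g p) * inverse (g p) * inverse (g p)
     + 2 * kap * (Dg p * cnj (g p) + g p * cnj (Dg p)) * (Dg p * cnj (g p) + g p * cnj (Dg p)) * h p"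
  proof -
    have "dir_deriv a Db p = dir_deriv a (\<lambda>z. - (\<i> * Dg z * inverse (g z) * inverse (g z)) + kap * (2 * (1 - g z * cnj (g z))
         * (- (Dg z * cnj (g z) + g z * cnj (Dg z))) * h z + (1 - g z * cnj (g z)) * (1 - g z * cnj (g z)) * Dh z)) p"
      by (rule dd_cong[OF S pS]) (use DbS_eq in auto)
    then show ?thesis using pS gnz hnz g0nz h0nz
      apply (simp add: dds)
      apply (simp only: Dg_def[symmetric] Dh_def[symmetric])
      by (simp add: cg0 field_simps)
  qed
  have dphi: "deriv (phi_fn g h) p = (deriv (deriv g) p * ((g p)^2 * h p) - deriv g p * (2 * g p * deriv g p * h p + (g p)^2 * deriv h p)) / ((g p)^2 * h p * ((g p)^2 * h p))"
  proof -
    have d1: "(deriv g has_field_derivative deriv (deriv g) p) (at p)"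
      by (rule holomorphic_derivI[OF holomorphic_deriv[OF gh S] S pS])
    have d2: "(g has_field_derivative deriv g p) (at p)" by (rule holomorphic_derivI[OF gh S pS])
    have d3: "(h has_field_derivative deriv h p) (at p)" by (rule holomorphic_derivI[OF hh S pS])
    have pf: "phi_fn g h = (\<lambda>z. deriv g z / ((g z)^2 * h z))" by (rule ext) (simp add: phi_fn_def)
    have "((\<lambda>z. deriv g z / ((g z)^2 * h z)) has_field_derivative
       (deriv (deriv g) p * ((g p)^2 * h p) - deriv g p * (of_nat 2 * (deriv g p * (g p)^(2 - Suc 0)) * h p + deriv h p * (g p)^2)) / ((g p)^2 * h p * ((g p)^2 * h p))) (at p)"
      by (rule DERIV_divide[OF d1 DERIV_mult[OF DERIV_power[OF d2] d3]]) (use g0nz h0nz in simp)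
    then show ?thesis unfolding pf by (simp add: DERIV_imp_deriv algebra_simps)
  qed
  have part3: "M3 p = smat (2 * \<i> * complex_of_real (Im (phi_fn g h p) * Im (V_op g (phi_fn g h) p))) (mat2 0 (g p) (- cnj (g p)) 0)"
  proof -
    have M3e: "M3 p = dir_deriv a D1 p + smat (b p) (Amat g p ** M2 p) + smat (cnj (b p)) (M2 p ** cstar (Amat g p))
       + smat (b p) (Amat g p ** M2 p) + smat (cnj (b p)) (M2 p ** cstar (Amat g p))"
      unfolding M3_def Nop_def dM2 by (simp add: add.assoc)
    have dD1: "dir_deriv a D1 p = mat2
      (dir_deriv a Db p * g p + Db p * Dg p + (Db p * Dg p + b p * dir_deriv a Dg p) + (cnj (dir_deriv a Db p) * cnj (g p) + cnj (Db p) * cnj (Dg p) + (cnj (Db p) * cnj (Dg p) + cnj (b p) * cnj (dir_deriv a Dg p))))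
      (dir_deriv a Db p * (g p * g p) + Db p * (Dg p * g p + g p * Dg p) + (Db p * (Dg p * g p + g p * Dg p) + b p * (dir_deriv a Dg p * g p + Dg p * Dg p + (Dg p * Dg p + g p * dir_deriv a Dg p))) + cnj (dir_deriv a Db p))
      (dir_deriv a Db p + (cnj (dir_deriv a Db p) * (cnj (g p) * cnj (g p)) + cnj (Db p) * (cnj (Dg p) * cnj (g p) + cnj (g p) * cnj (Dg p)) + (cnj (Db p) * (cnj (Dg p) * cnj (g p) + cnj (g p) * cnj (Dg p)) + cnj (b p) * (cnj (dir_deriv a Dg p) * cnj (g p) + cnj (Dg p) * cnj (Dg p) + (cnj (Dg p) * cnj (Dg p) + cnj (g p) * cnj (dir_deriv a Dg p))))))
      (dir_deriv a Db p * g p + Db p * Dg p + (Db p * Dg p + b p * dir_deriv a Dg p) + (cnj (dir_deriv a Db p) * cnj (g p) + cnj (Db p) * cnj (Dg p) + (cnj (Db p) * cnj (Dg p) + cnj (b p) * cnj (dir_deriv a Dg p))))"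
      unfolding D1_def
      apply (subst dd_mat2[OF S])
      using pS by (simp_all add: dds Dg_def[symmetric] Db_def[symmetric] algebra_simps)
    show ?thesis
      unfolding M3e dD1 part2 ofIm of_real_mult cphi V_op_def dphi
      using g0nz h0nz p_nondeg
      apply (simp add: DDb0 DDg0 Da0 Db0 Dg0 Dh0 a0 b0 cg0 cg1 kap_def kappa_def phi0 smat_mat2 mat2_add mat2_mult Amat_def cstar_mat2)
      apply (simp add: field_simps)
      by (intro conjI; algebra)
  qed
  show ?thesis
    using I2[OF pS] I3[OF pS] part2 part3 unfolding a_def by (simp add: fsmat)
qed


theorem lemma4p7:
  fixes D :: "complex set" and g h :: "complex \<Rightarrow> complex"
    and F :: "complex \<Rightarrow> complex^2^2" and p :: complex
  assumes D: "open D" "connected D" "p \<in> D"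
    and g_mero: "g nicely_meromorphic_on D"
    and h_hol: "h holomorphic_on D"
    and metric_reg: "\<forall>z\<in>D. \<not> is_pole g z \<longrightarrow> h z \<noteq> 0"
    and metric_pole: "\<forall>z\<in>D. is_pole g z \<longrightarrow> (\<exists>c. c \<noteq> 0 \<and> ((\<lambda>w. (g w)^2 * h w) \<longlongrightarrow> c) (at z))"
    and lambda_nonzero: "\<exists>z\<in>D. \<not> is_pole g z \<and> norm (g z) \<noteq> 1"
    and F_hol: "\<forall>i j. (\<lambda>z. F z $ i $ j) holomorphic_on D"
    and F_SL2: "\<forall>z\<in>D. det (F z) = 1"
    and F_ode: "\<forall>z\<in>D. \<not> is_pole g z \<longrightarrow> (\<forall>i j. ((\<lambda>w. F w $ i $ j) has_field_derivative
                  (F z ** smat (h z) (mat2 (g z) (- ((g z)^2)) 1 (- g z))) $ i $ j) (at z))"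
    and p_reg: "\<not> is_pole g p"
    and p_sing: "norm (g p) = 1"
    and p_nondeg: "deriv g p \<noteq> 0"
    and p_nonfront: "Re (phi_fn g h p) = 0"
  shows "dir_deriv_pow 2 (zeta_coef g h p) (cmc1_f F) p
           = smat (- 2 * \<i> * complex_of_real (Im (phi_fn g h p)))
               (F p ** mat2 0 (g p) (- cnj (g p)) 0 ** cstar (F p))
       \<and> dir_deriv_pow 3 (zeta_coef g h p) (cmc1_f F) p
           = smat (2 * \<i> * complex_of_real (Im (phi_fn g h p) * Im (V_op g (phi_fn g h) p)))
               (F p ** mat2 0 (g p) (- cnj (g p)) 0 ** cstar (F p))"
  proof -
  have gan: "g analytic_on {p}" by (rule nicely_meromorphic_on_imp_analytic_at[OF g_mero D(3) p_reg])
  then obtain e1 where e1: "e1 > 0" "g holomorphic_on ball p e1" using analytic_at_ball by blast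
  obtain e2 where e2: "e2 > 0" "ball p e2 \<subseteq> D" using D(1,3) openE by blast
  have g0: "g p \<noteq> 0" using p_sing by auto
  have "continuous_on (ball p e1) g" using e1(2) holomorphic_on_imp_continuous_on by blast
  then have cg: "isCont g p" using e1(1) continuous_on_eq_continuous_at[OF open_ball, of p e1 g] by simp
  obtain e3 where e3: "e3 > 0" "\<forall>y. dist p y < e3 \<longrightarrow> g y \<noteq> 0"
    using continuous_at_avoid[OF cg g0] by blast
  have h0: "h p \<noteq> 0" using metric_reg D(3) p_reg by blast
  have "continuous_on D h" using h_hol holomorphic_on_imp_continuous_on by blast
  then have ch: "isCont h p" using D(1,3) continuous_on_eq_continuous_at by blast
  obtain e4 where e4: "e4 > 0" "\<forall>y. dist p y < e4 \<longrightarrow> h y \<noteq> 0"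
    using continuous_at_avoid[OF ch h0] by blast
  define r where "r = min (min e1 e2) (min e3 e4)"
  define S where "S = ball p r"
  have r: "r > 0" using e1 e2 e3 e4 unfolding r_def by simp
  have S: "open S" "p \<in> S" unfolding S_def using r by auto
  have SD: "S \<subseteq> D" using e2 unfolding S_def r_def by auto
  have gh: "g holomorphic_on S" using e1(2) unfolding S_def r_def by (rule holomorphic_on_subset) auto
  have hh: "h holomorphic_on S" using h_hol SD by (rule holomorphic_on_subset)
  have gnz: "\<forall>z\<in>S. g z \<noteq> 0" using e3 unfolding S_def r_def by auto
  have hnz: "\<forall>z\<in>S. h z \<noteq> 0" using e4 unfolding S_def r_def by auto
  have Fh: "\<forall>i j. (\<lambda>z. F z $ i $ j) holomorphic_on S" using F_hol SD holomorphic_on_subset by blast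
  have Fode: "\<forall>z\<in>S. \<forall>i j. ((\<lambda>w. F w $ i $ j) has_field_derivative
                  (F z ** smat (h z) (mat2 (g z) (- ((g z)^2)) 1 (- g z))) $ i $ j) (at z)"
  proof
    fix z assume z: "z \<in> S"
    have "\<not> is_pole g z" by (rule not_is_pole_holomorphic[OF S(1) z gh])
    then show "\<forall>i j. ((\<lambda>w. F w $ i $ j) has_field_derivative
                  (F z ** smat (h z) (mat2 (g z) (- ((g z)^2)) 1 (- g z))) $ i $ j) (at z)"
      using F_ode z SD by blast
  qed
  show ?thesis by (rule core[OF S gh hh gnz hnz Fh Fode p_sing p_nondeg p_nonfront])
qed

end
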